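(* Let $A$ be an $n\times n$ $(0,1)$-matrix, and let $\Phi$ be a depth-$2$ circuit with $L$ wires computing the linear operator $f_A(\vec x)=A\vec x$ over $GF(2)$. Suppose every output node of $\Phi$ computes a linear boolean function. Then there is a depth-$2$ circuit $\Phi'$ that computes $f_A$, has at most $L+2n$ wires, and in which every non-input node computes a linear boolean function.
   Context: A depth-$2$ circuit has $n$ input nodes $x_1,\dots,x_n$, a set of middle nodes, and $n$ output nodes $y_1,\dots,y_n$. Wires go only from inputs to middle nodes, from middle nodes to outputs, or from inputs directly to outputs. Each non-input node may compute an arbitrary boolean function of the values at its in-neighbours, with no restriction on fanin or fanout. The circuit computes $f=(f_1,\dots,f_n)$ if the function at $y_i$ equals $f_i$ for all $i$. A boolean function is linear if it is the sum modulo $2$ of some subset of its arguments (the empty sum is allowed) or the negation of such a sum. The number of wires is the number of edges of the circuit. *)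

theory Defs
  imports Main
begin

text \<open>Depth-2 circuits on n inputs (indices 0..n-1), middle nodes 0..mid-1, outputs 0..n-1.
  Each node's gate is applied to the assignment restricted to its in-neighbours,
  so it can depend only on the values at its in-neighbours.\<close>

record circuit =
  mid  :: nat
  inM  :: "nat \<Rightarrow> nat set"
  gM   :: "nat \<Rightarrow> (nat \<Rightarrow> bool) \<Rightarrow> bool"
  inO  :: "nat \<Rightarrow> nat set"
  midO :: "nat \<Rightarrow> nat set"
  gO   :: "nat \<Rightarrow> (nat \<Rightarrow> bool) \<Rightarrow> (nat \<Rightarrow> bool) \<Rightarrow> bool"

definition restr :: "(nat \<Rightarrow> bool) \<Rightarrow> nat set \<Rightarrow> nat \<Rightarrow> bool" where
  "restr x S = (\<lambda>i. if i \<in> S then x i else False)"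

definition wf_circuit :: "nat \<Rightarrow> circuit \<Rightarrow> bool" where
  "wf_circuit n C \<longleftrightarrow>
     (\<forall>j<mid C. inM C j \<subseteq> {..<n}) \<and>
     (\<forall>i<n. inO C i \<subseteq> {..<n} \<and> midO C i \<subseteq> {..<mid C})"

definition mval :: "circuit \<Rightarrow> (nat \<Rightarrow> bool) \<Rightarrow> nat \<Rightarrow> bool" where
  "mval C x j = gM C j (restr x (inM C j))"

definition outval :: "circuit \<Rightarrow> (nat \<Rightarrow> bool) \<Rightarrow> nat \<Rightarrow> bool" where
  "outval C x i = gO C i (restr x (inO C i)) (restr (mval C x) (midO C i))"

definition wires :: "nat \<Rightarrow> circuit \<Rightarrow> nat" where
  "wires n C = (\<Sum>j<mid C. card (inM C j)) + (\<Sum>i<n. card (inO C i) + card (midO C i))"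

definition par :: "nat set \<Rightarrow> (nat \<Rightarrow> bool) \<Rightarrow> bool" where
  "par T v = odd (card {i\<in>T. v i})"

text \<open>Linear operator x \<mapsto> A x over GF(2); A is an n\<times>n (0,1)-matrix given by its entries A i j, i,j < n.\<close>
definition linop :: "nat \<Rightarrow> (nat \<Rightarrow> nat \<Rightarrow> bool) \<Rightarrow> (nat \<Rightarrow> bool) \<Rightarrow> nat \<Rightarrow> bool" where
  "linop n A x i = par {j\<in>{..<n}. A i j} x"

definition computes :: "nat \<Rightarrow> (nat \<Rightarrow> nat \<Rightarrow> bool) \<Rightarrow> circuit \<Rightarrow> bool" where
  "computes n A C \<longleftrightarrow> (\<forall>x. \<forall>i<n. outval C x i = linop n A x i)"

definition linear_mid :: "circuit \<Rightarrow> nat \<Rightarrow> bool" where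
  "linear_mid C j \<longleftrightarrow> (\<exists>T\<subseteq>inM C j. \<exists>c. \<forall>v.
      gM C j (restr v (inM C j)) = (c \<noteq> par T v))"

definition linear_out :: "circuit \<Rightarrow> nat \<Rightarrow> bool" where
  "linear_out C i \<longleftrightarrow> (\<exists>T1\<subseteq>inO C i. \<exists>T2\<subseteq>midO C i. \<exists>c. \<forall>v w.
      gO C i (restr v (inO C i)) (restr w (midO C i)) = (c \<noteq> (par T1 v \<noteq> par T2 w)))"

end

theory Submission imports Defs "HOL-Library.Z2" begin
abbreviation B :: "bool \<Rightarrow> bit" where "B \<equiv> of_bool"
lemma B_xor: "B (p \<noteq> q) = B p + B q" by (cases p; cases q) auto
lemma bit_add_self: "(a::bit) + a = 0" by (cases a) auto
lemma B_inj: "(B p = B q) = (p = q)" by (cases p; cases q) auto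
lemma par_B: "finite T \<Longrightarrow> B (par T v) = (\<Sum>i\<in>T. B (v i))"
proof (induction T rule: finite_induct)
  case empty then show ?case by (simp add: par_def)
next
  case (insert a T)
  have "{i\<in>insert a T. v i} = (if v a then insert a {i\<in>T. v i} else {i\<in>T. v i})" by auto
  moreover have "finite {i\<in>T. v i}" using insert by auto
  ultimately show ?case using insert by (auto simp: par_def B_xor)
qed
lemma par_restr: "T \<subseteq> S \<Longrightarrow> par T (restr v S) = par T v"
proof -
  assume h: "T \<subseteq> S"
  have "{i\<in>T. restr v S i} = {i\<in>T. v i}" using h by (auto simp: restr_def)
  then show ?thesis by (simp add: par_def)
qed
lemma Q_lin: "T \<subseteq> {..<(n::nat)} \<Longrightarrow> (\<Sum>i\<in>T. B (x i)) = (\<Sum>k<n. B (x k) * B (k \<in> T))"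
proof -
  assume h: "T \<subseteq> {..<n}"
  have "(\<Sum>k<n. B (x k) * B (k \<in> T)) = (\<Sum>k\<in>T. B (x k) * B (k \<in> T))"
    by (rule sum.mono_neutral_right) (use h in auto)
  also have "\<dots> = (\<Sum>k\<in>T. B (x k))" by (rule sum.cong) auto
  finally show ?thesis by simp
qed
lemma Q_e: "finite T \<Longrightarrow> (\<Sum>i\<in>T. B (i = k)) = B (k \<in> T)"
  by (simp add: of_bool_def sum.delta)

lemma bit_solve: "(a::bit) + b + c = d \<Longrightarrow> c = d + a + b"
  by (cases a; cases b; cases c; cases d) auto

lemma bool_to_bit: "(a \<noteq> (b \<noteq> c)) = d \<Longrightarrow> B a + B b + B c = B d"
  by (cases a; cases b; cases c; cases d) auto

lemma bit_cancel: "(c::bit) + a + b + (c + 0 + 0) = a + b"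
  by (cases a; cases b; cases c) auto

lemma mval_same:
  assumes "restr x (inM C j) = restr y (inM C j)"
  shows "mval C x j = mval C y j"
  using assms by (simp add: mval_def)

theorem theorem2:
  fixes n :: nat and A :: "nat \<Rightarrow> nat \<Rightarrow> bool" and \<Phi> :: circuit
  assumes "wf_circuit n \<Phi>"
    and "computes n A \<Phi>"
    and "\<forall>i<n. linear_out \<Phi> i"
  shows "\<exists>\<Phi>'. wf_circuit n \<Phi>' \<and> computes n A \<Phi>' \<and> wires n \<Phi>' \<le> wires n \<Phi> + 2 * n \<and>
           (\<forall>j<mid \<Phi>'. linear_mid \<Phi>' j) \<and> (\<forall>i<n. linear_out \<Phi>' i)"
proof -
  have "\<forall>i. \<exists>t. i<n \<longrightarrow> fst t \<subseteq> inO \<Phi> i \<and> fst (snd t) \<subseteq> midO \<Phi> i \<and>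
     (\<forall>v w. gO \<Phi> i (restr v (inO \<Phi> i)) (restr w (midO \<Phi> i)) =
         (snd (snd t) \<noteq> (par (fst t) v \<noteq> par (fst (snd t)) w)))"
  proof
    fix i
    show "\<exists>t. i<n \<longrightarrow> fst t \<subseteq> inO \<Phi> i \<and> fst (snd t) \<subseteq> midO \<Phi> i \<and>
     (\<forall>v w. gO \<Phi> i (restr v (inO \<Phi> i)) (restr w (midO \<Phi> i)) =
         (snd (snd t) \<noteq> (par (fst t) v \<noteq> par (fst (snd t)) w)))"
    proof (cases "i < n")
      case True
      then have "linear_out \<Phi> i" using assms(3) by simp
      then have "\<exists>T1 T2 c. T1 \<subseteq> inO \<Phi> i \<and> T2 \<subseteq> midO \<Phi> i \<and> (\<forall>v w. gO \<Phi> i (restr v (inO \<Phi> i)) (restr w (midO \<Phi> i)) =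
         (c \<noteq> (par T1 v \<noteq> par T2 w)))" unfolding linear_out_def by auto
      then obtain T1 T2 c where h: "T1 \<subseteq> inO \<Phi> i \<and> T2 \<subseteq> midO \<Phi> i \<and> (\<forall>v w. gO \<Phi> i (restr v (inO \<Phi> i)) (restr w (midO \<Phi> i)) =
         (c \<noteq> (par T1 v \<noteq> par T2 w)))" by (elim exE) (erule that)
      show ?thesis by (rule exI[of _ "(T1, T2, c)"]) (simp add: h)
    qed simp
  qed
  then obtain tt where tt0: "\<forall>i. i<n \<longrightarrow> fst (tt i) \<subseteq> inO \<Phi> i \<and> fst (snd (tt i)) \<subseteq> midO \<Phi> i \<and>
     (\<forall>v w. gO \<Phi> i (restr v (inO \<Phi> i)) (restr w (midO \<Phi> i)) =
         (snd (snd (tt i)) \<noteq> (par (fst (tt i)) v \<noteq> par (fst (snd (tt i))) w)))"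
    by (rule choice[THEN exE])
  note tt = tt0[rule_format]
  define T1 where "T1 i = fst (tt i)" for i
  define T2 where "T2 i = fst (snd (tt i))" for i
  define cc where "cc i = snd (snd (tt i))" for i
  have T1s: "T1 i \<subseteq> inO \<Phi> i" and T2s: "T2 i \<subseteq> midO \<Phi> i"
    and gOe: "\<And>v w. gO \<Phi> i (restr v (inO \<Phi> i)) (restr w (midO \<Phi> i)) = (cc i \<noteq> (par (T1 i) v \<noteq> par (T2 i) w))"
    if "i < n" for i using tt[OF that] by (auto simp: T1_def T2_def cc_def)
  have wf: "\<And>j. j < mid \<Phi> \<Longrightarrow> inM \<Phi> j \<subseteq> {..<n}"
    "\<And>i. i < n \<Longrightarrow> inO \<Phi> i \<subseteq> {..<n} \<and> midO \<Phi> i \<subseteq> {..<mid \<Phi>}"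
    using assms(1) by (auto simp: wf_circuit_def)
  define g0 :: "nat \<Rightarrow> bool" where "g0 = (\<lambda>_. False)"
  define e :: "nat \<Rightarrow> nat \<Rightarrow> bool" where "e k = (\<lambda>i. i = k)" for k
  define TM where "TM j = {k\<in>inM \<Phi> j. mval \<Phi> (e k) j \<noteq> mval \<Phi> g0 j}" for j
  define \<Phi>' where "\<Phi>' = \<Phi>\<lparr>gM := (\<lambda>j v. par (TM j) v),
     gO := (\<lambda>i a w. (cc i \<noteq> par (T2 i) (mval \<Phi> g0)) \<noteq> (par (T1 i) a \<noteq> par (T2 i) w))\<rparr>"
  have TMs: "TM j \<subseteq> inM \<Phi> j" for j by (auto simp: TM_def)
  have mval': "mval \<Phi>' x j = par (TM j) x" for x j
    by (simp add: \<Phi>'_def mval_def par_restr[OF TMs])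
  define G where "G i x = (\<Sum>j\<in>T2 i. B (mval \<Phi> x j))" for i x
  have key: "(\<Sum>j\<in>T2 i. B (mval \<Phi>' x j)) = G i x + G i g0" if i: "i < n" for i x
  proof -
    define S where "S = {j\<in>{..<n}. A i j}"
    have fin2: "finite (T2 i)" using T2s[OF i] wf(2)[OF i] by (meson finite_lessThan finite_subset subset_trans)
    have T1n: "T1 i \<subseteq> {..<n}" using T1s[OF i] wf(2)[OF i] by blast
    have Sn: "S \<subseteq> {..<n}" by (auto simp: S_def)
    have Gf: "G i y = B (cc i) + (\<Sum>k\<in>T1 i. B (y k)) + (\<Sum>k\<in>S. B (y k))" for y
    proof -
      have "outval \<Phi> y i = linop n A y i" using assms(2) i by (simp add: computes_def)
      then have "(cc i \<noteq> (par (T1 i) y \<noteq> par (T2 i) (mval \<Phi> y))) = par S y"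
        by (simp add: outval_def gOe[OF i] linop_def S_def par_restr[OF T1s[OF i]] par_restr[OF T2s[OF i]])
      then have "B (cc i) + B (par (T1 i) y) + B (par (T2 i) (mval \<Phi> y)) = B (par S y)"
        by (rule bool_to_bit)
      then have "B (cc i) + B (par (T1 i) y) + G i y = B (par S y)"
        by (simp add: G_def par_B[OF fin2])
      then have "G i y = B (par S y) + B (cc i) + B (par (T1 i) y)"
        by (rule bit_solve)
      moreover have fS: "finite S" using Sn finite_subset by blast
      moreover have fT: "finite (T1 i)" using T1n finite_subset by blast
      ultimately show ?thesis
        by (simp only: par_B[OF fS] par_B[OF fT] ac_simps)
    qed
    have Gd: "G i y + G i g0 = (\<Sum>k<n. B (y k) * (B (k \<in> T1 i) + B (k \<in> S)))" for y
    proof -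
      have z: "(\<Sum>k\<in>T. B (g0 k)) = 0" for T by (simp add: g0_def)
      have "G i y + G i g0 = (\<Sum>k\<in>T1 i. B (y k)) + (\<Sum>k\<in>S. B (y k))"
        unfolding Gf z by (rule bit_cancel)
      also have "\<dots> = (\<Sum>k<n. B (y k) * (B (k \<in> T1 i) + B (k \<in> S)))"
        by (simp only: Q_lin[OF T1n] Q_lin[OF Sn] distrib_left sum.distrib)
      finally show ?thesis .
    qed
    have per: "B (par (TM j) x) = (\<Sum>k<n. B (x k) * (B (mval \<Phi> (e k) j) + B (mval \<Phi> g0 j)))"
      if j: "j \<in> T2 i" for j
    proof -
      have jm: "j < mid \<Phi>" using j T2s[OF i] wf(2)[OF i] by blast
      have TMn: "TM j \<subseteq> {..<n}" using TMs wf(1)[OF jm] by blast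
      have "B (par (TM j) x) = (\<Sum>k<n. B (x k) * B (k \<in> TM j))"
        using par_B[OF finite_subset[OF TMn]] Q_lin[OF TMn] by simp
      also have "\<dots> = (\<Sum>k<n. B (x k) * (B (mval \<Phi> (e k) j) + B (mval \<Phi> g0 j)))"
      proof (rule sum.cong)
        fix k assume "k \<in> {..<n}"
        have "B (k \<in> TM j) = B (mval \<Phi> (e k) j \<noteq> mval \<Phi> g0 j)"
        proof (cases "k \<in> inM \<Phi> j")
          case False
          then have "restr (e k) (inM \<Phi> j) = restr g0 (inM \<Phi> j)"
            by (auto simp: restr_def e_def g0_def)
          then have "mval \<Phi> (e k) j = mval \<Phi> g0 j" by (rule mval_same)
          then show ?thesis using False by (simp add: TM_def)
        qed (simp add: TM_def)
        then show "B (x k) * B (k \<in> TM j) = B (x k) * (B (mval \<Phi> (e k) j) + B (mval \<Phi> g0 j))"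
          by (simp add: B_xor)
      qed simp
      finally show ?thesis .
    qed
    have "(\<Sum>j\<in>T2 i. B (mval \<Phi>' x j)) = (\<Sum>j\<in>T2 i. \<Sum>k<n. B (x k) * (B (mval \<Phi> (e k) j) + B (mval \<Phi> g0 j)))"
      by (rule sum.cong) (simp_all add: mval' per)
    also have "\<dots> = (\<Sum>k<n. \<Sum>j\<in>T2 i. B (x k) * (B (mval \<Phi> (e k) j) + B (mval \<Phi> g0 j)))"
      by (rule sum.swap)
    also have "\<dots> = (\<Sum>k<n. B (x k) * (G i (e k) + G i g0))"
      by (simp only: G_def distrib_left sum_distrib_left sum.distrib)
    also have "\<dots> = (\<Sum>k<n. B (x k) * (B (k \<in> T1 i) + B (k \<in> S)))"
    proof (rule sum.cong)
      fix k assume k: "k \<in> {..<n}"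
      have "G i (e k) + G i g0 = (\<Sum>k'<n. B (e k k') * (B (k' \<in> T1 i) + B (k' \<in> S)))" by (rule Gd)
      also have "\<dots> = (\<Sum>k'<n. if k' = k then B (k \<in> T1 i) + B (k \<in> S) else 0)"
        by (rule sum.cong) (auto simp: e_def)
      also have "\<dots> = B (k \<in> T1 i) + B (k \<in> S)" using k by simp
      finally show "B (x k) * (G i (e k) + G i g0) = B (x k) * (B (k \<in> T1 i) + B (k \<in> S))" by simp
    qed simp
    also have "\<dots> = G i x + G i g0" by (rule Gd[symmetric])
    finally show ?thesis .
  qed
  have comp: "computes n A \<Phi>'"
    unfolding computes_def
  proof (intro allI impI)
    fix x i assume i: "i < n"
    have fin2: "finite (T2 i)" using T2s[OF i] wf(2)[OF i] by (meson finite_lessThan finite_subset subset_trans)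
    have k2: "par (T2 i) (mval \<Phi>' x) = (par (T2 i) (mval \<Phi> x) \<noteq> par (T2 i) (mval \<Phi> g0))"
      using key[OF i, of x] unfolding G_def par_B[OF fin2, symmetric] B_xor[symmetric] B_inj .
    have "outval \<Phi> x i = linop n A x i" using assms(2) i by (simp add: computes_def)
    then have "(cc i \<noteq> (par (T1 i) x \<noteq> par (T2 i) (mval \<Phi> x))) = linop n A x i"
      by (simp add: outval_def gOe[OF i] par_restr[OF T1s[OF i]] par_restr[OF T2s[OF i]])
    moreover have "outval \<Phi>' x i = ((cc i \<noteq> par (T2 i) (mval \<Phi> g0)) \<noteq> (par (T1 i) x \<noteq> par (T2 i) (mval \<Phi>' x)))"
      by (simp add: outval_def \<Phi>'_def par_restr[OF T1s[OF i]] par_restr[OF T2s[OF i]])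
    ultimately show "outval \<Phi>' x i = linop n A x i" using k2 by auto
  qed
  have "wf_circuit n \<Phi>'" using assms(1) by (simp add: wf_circuit_def \<Phi>'_def)
  moreover have "wires n \<Phi>' = wires n \<Phi>" by (simp add: wires_def \<Phi>'_def)
  moreover have "\<forall>j<mid \<Phi>'. linear_mid \<Phi>' j"
    unfolding linear_mid_def
  proof (intro allI impI)
    fix j
    show "\<exists>T\<subseteq>inM \<Phi>' j. \<exists>c. \<forall>v. gM \<Phi>' j (restr v (inM \<Phi>' j)) = (c \<noteq> par T v)"
      by (intro exI[of _ "TM j"] conjI exI[of _ False]) (auto simp: \<Phi>'_def TMs par_restr[OF TMs])
  qed
  moreover have "\<forall>i<n. linear_out \<Phi>' i"
    unfolding linear_out_def
  proof (intro allI impI)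
    fix i assume i: "i < n"
    show "\<exists>T1\<subseteq>inO \<Phi>' i. \<exists>T2\<subseteq>midO \<Phi>' i. \<exists>c. \<forall>v w. gO \<Phi>' i (restr v (inO \<Phi>' i)) (restr w (midO \<Phi>' i)) = (c \<noteq> (par T1 v \<noteq> par T2 w))"
      by (rule exI[of _ "T1 i"], rule conjI, simp add: \<Phi>'_def T1s[OF i],
          rule exI[of _ "T2 i"], rule conjI, simp add: \<Phi>'_def T2s[OF i],
          rule exI[of _ "cc i \<noteq> par (T2 i) (mval \<Phi> g0)"])
        (simp add: \<Phi>'_def par_restr[OF T1s[OF i]] par_restr[OF T2s[OF i]])
  qed
  ultimately show ?thesis using comp by (intro exI[of _ \<Phi>']) simp
qed

end
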